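(* Let $q\ge2$, $r\ge2$, $t,s\ge0$ be integers, let $M=\sum_{i=1}^{t}A_{t-i,s}(r-1)+\sum_{i=1}^{s}A_{t,s-i}(r-1)+1$, and let $\mathbf{y}_1,\dots,\mathbf{y}_M$ be distinct sequences and $\mathbf{x}\in J_r^*$ a sequence with $\mathbf{y}_i\in\mathcal{B}_{t,s}(\mathbf{x})$ for all $i\in[M]$. Write $\phi(\mathbf{y}_i)=\mathbf{v}_i=(v_{i,1},\dots,v_{i,r})$ and $\phi(\mathbf{x})=\mathbf{u}=(u_1,\dots,u_r)$. For $j\in[r]$ let $a_j=\min_{i\in[M]}v_{i,j}$, $b_j=\max_{i\in[M]}v_{i,j}$, and for each integer $k$ let $c_{j,k}$ be the number of indices $i\in[M]$ with $v_{i,j}=k$ (so $\sum_{k=a_j}^{b_j}c_{j,k}=M$). Then for every $j\in[r]$: (1) $b_j-t\le u_j\le a_j+s$; (2) for every integer $k$ with $a_j\le k<u_j$, $c_{j,k}\le A_{t,\,s-u_j+k}(r-1)$; (3) for every integer $k$ with $u_j<k\le b_j$, $c_{j,k}\le A_{t-k+u_j,\,s}(r-1)$.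
   Context: $\Sigma_q=\{0,\dots,q-1\}$. Every finite string $\mathbf{x}$ over $\Sigma_q$ is uniquely $c_1^{u_1}\cdots c_r^{u_r}$ with $c_i\ne c_{i+1}$, $u_i\ge1$; $r$ is its number of runs, $J_r^*$ the set of strings with exactly $r$ runs, and $\phi(\mathbf{x})=(u_1,\dots,u_r)\in\mathbb{Z}_+^r$ its run-length vector. The sticky-insdel ball $\mathcal{B}_{t,s}(\mathbf{x})$ (strings obtainable by at most $t$ sticky insertions, i.e. duplications of a symbol within its run, and at most $s$ sticky deletions, i.e. deletions of a symbol from a run of length $\ge2$) is the set of strings $c_1^{v_1}\cdots c_r^{v_r}$ with $(v_1,\dots,v_r)\in\mathbb{Z}_+^r$, $\sum_i\max\{0,u_i-v_i\}\le s$ and $\sum_i\max\{0,v_i-u_i\}\le t$. The numbers $A_{t,s}(r)$ (integers $t,s$, $r\ge1$): $A_{t,s}(r)=0$ if $t<0$ or $s<0$; $A_{t,s}(1)=t+s+1$ for $t,s\ge0$; for $r\ge2$, $t,s\ge0$: $A_{t,s}(r)=\sum_{i=1}^{t}A_{t-i,s}(r-1)+\sum_{i=1}^{s}A_{t,s-i}(r-1)+A_{t,s}(r-1)$. *)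

theory Defs
  imports Main
begin

text \<open>Run-length decomposition: a string is c_1^{u_1}...c_r^{u_r} with c_i \<noteq> c_{i+1}, u_i \<ge> 1;
  runs x lists the pairs (c_i, u_i).\<close>
fun runs :: "'a list \<Rightarrow> ('a \<times> nat) list" where
  "runs [] = []"
| "runs (x # xs) = (case runs xs of
      [] \<Rightarrow> [(x, 1)]
    | (c, n) # rs \<Rightarrow> (if c = x then (c, Suc n) # rs else (x, 1) # (c, n) # rs))"

definition phi :: "'a list \<Rightarrow> nat list" where
  "phi x = map snd (runs x)"

definition run_syms :: "'a list \<Rightarrow> 'a list" where
  "run_syms x = map fst (runs x)"

definition Jstar :: "nat \<Rightarrow> nat \<Rightarrow> nat list set" where
  "Jstar q r = {x. set x \<subseteq> {..<q} \<and> length (runs x) = r}"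

definition sticky_ball :: "int \<Rightarrow> int \<Rightarrow> 'a list \<Rightarrow> 'a list set" where
  "sticky_ball t s x = {y. \<exists>v :: nat list.
      length v = length (runs x) \<and> (\<forall>i<length v. 1 \<le> v ! i) \<and>
      y = concat (map2 (\<lambda>c n. replicate n c) (run_syms x) v) \<and>
      (\<Sum>i<length v. max 0 (int (phi x ! i) - int (v ! i))) \<le> s \<and>
      (\<Sum>i<length v. max 0 (int (v ! i) - int (phi x ! i))) \<le> t}"

text \<open>A_{t,s}(r), with Arec n = A_{.,.}(n+1).\<close>
primrec Arec :: "nat \<Rightarrow> int \<Rightarrow> int \<Rightarrow> nat" where
  "Arec 0 t s = (if t < 0 \<or> s < 0 then 0 else nat (t + s + 1))"
| "Arec (Suc n) t s = (if t < 0 \<or> s < 0 then 0 else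
      (\<Sum>i\<in>{1..t}. Arec n (t - i) s) + (\<Sum>i\<in>{1..s}. Arec n t (s - i)) + Arec n t s)"

text \<open>A t s r = A_{t,s}(r), meaningful for r \<ge> 1.\<close>
definition A :: "int \<Rightarrow> int \<Rightarrow> nat \<Rightarrow> nat" where
  "A t s r = Arec (r - 1) t s"

end

theory Submission
  imports Defs
begin

definition D :: "nat \<Rightarrow> int \<Rightarrow> int \<Rightarrow> int list set" where
 "D n t s = {d. length d = n \<and> sum_list (map (\<lambda>z. max 0 z) d) \<le> t \<and> sum_list (map (\<lambda>z. max 0 (-z)) d) \<le> s}"

lemma D_Suc: "D (Suc n) t s = (\<Union>z\<in>{-s..t}. (\<lambda>d. z # d) ` D n (t - max 0 z) (s - max 0 (-z)))"
proof -
  have nn: "0 \<le> sum_list (map (\<lambda>z. max 0 z) d)" "0 \<le> sum_list (map (\<lambda>z. max 0 (-z::int)) d)" for d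
    by (intro sum_list_nonneg; auto)+
  show ?thesis
  proof (intro equalityI subsetI)
    fix d assume "d \<in> D (Suc n) t s"
    then obtain z d' where d: "d = z # d'" "length d' = n"
      "max 0 z + sum_list (map (\<lambda>z. max 0 z) d') \<le> t"
      "max 0 (-z) + sum_list (map (\<lambda>z. max 0 (-z)) d') \<le> s"
      unfolding D_def by (auto simp: length_Suc_conv)
    have "z \<le> max 0 z" "-z \<le> max 0 (-z)" by simp_all
    then have "z \<in> {-s..t}" using d(3,4) nn[of d'] unfolding atLeastAtMost_iff by linarith
    moreover have "d' \<in> D n (t - max 0 z) (s - max 0 (-z))" using d unfolding D_def by simp
    ultimately show "d \<in> (\<Union>z\<in>{-s..t}. (\<lambda>d. z # d) ` D n (t - max 0 z) (s - max 0 (-z)))"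
      using d(1) by blast
  next
    fix d assume "d \<in> (\<Union>z\<in>{-s..t}. (\<lambda>d. z # d) ` D n (t - max 0 z) (s - max 0 (-z)))"
    then obtain z d' where "d = z # d'" "d' \<in> D n (t - max 0 z) (s - max 0 (-z))" by blast
    then show "d \<in> D (Suc n) t s" unfolding D_def by simp
  qed
qed

lemma D_0: "D 0 t s = (if t \<ge> 0 \<and> s \<ge> 0 then {[]} else {})"
  by (auto simp: D_def)

lemma D_finite: "finite (D n t s)"
proof (induction n arbitrary: t s)
  case 0 then show ?case by (simp add: D_0)
next
  case (Suc n) then show ?case by (simp add: D_Suc)
qed

lemma D_card_Suc: "card (D (Suc n) t s) = (\<Sum>z\<in>{-s..t}. card (D n (t - max 0 z) (s - max 0 (-z))))"
  unfolding D_Suc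
  apply (subst card_UN_disjoint)
     apply (auto simp: D_finite card_image)
  done

lemma D_empty: "t < 0 \<or> s < 0 \<Longrightarrow> D n t s = {}"
proof -
  have nn: "0 \<le> sum_list (map (\<lambda>z. max 0 z) d)" "0 \<le> sum_list (map (\<lambda>z. max 0 (-z::int)) d)" for d
    by (intro sum_list_nonneg; auto)+
  assume a: "t < 0 \<or> s < 0"
  show ?thesis unfolding D_def
  proof (intro equalityI subsetI)
    fix d assume "d \<in> {d. length d = n \<and> sum_list (map (\<lambda>z. max 0 z) d) \<le> t \<and> sum_list (map (\<lambda>z. max 0 (-z)) d) \<le> s}"
    then show "d \<in> {}" using a nn[of d] by auto
  qed auto
qed

lemma split_sum:
  fixes f :: "int \<Rightarrow> int \<Rightarrow> nat"
  assumes "t \<ge> 0" "s \<ge> 0"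
  shows "(\<Sum>z\<in>{-s..t}. f (t - max 0 z) (s - max 0 (-z))) =
     (\<Sum>i\<in>{1..t}. f (t-i) s) + (\<Sum>i\<in>{1..s}. f t (s-i)) + f t s"
proof -
  have e: "{-s..t} = {1..t} \<union> (uminus ` {1..s}) \<union> {0}" using assms
  proof (intro set_eqI iffI)
    fix z assume "z \<in> {-s..t}"
    then show "z \<in> {1..t} \<union> (uminus ` {1..s}) \<union> {0}"
      by (cases "z > 0"; cases "z = 0") (auto intro!: image_eqI[of _ uminus "-z"])
  qed (use assms in auto)
  have "(\<Sum>z\<in>{-s..t}. f (t - max 0 z) (s - max 0 (-z))) =
     (\<Sum>z\<in>{1..t}. f (t - max 0 z) (s - max 0 (-z))) + (\<Sum>z\<in>uminus ` {1..s}. f (t - max 0 z) (s - max 0 (-z)))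
     + (\<Sum>z\<in>{0}. f (t - max 0 z) (s - max 0 (-z)))"
    unfolding e
    apply (subst sum.union_disjoint, auto)+
    done
  also have "(\<Sum>z\<in>{1..t}. f (t - max 0 z) (s - max 0 (-z))) = (\<Sum>i\<in>{1..t}. f (t-i) s)"
    by (rule sum.cong) auto
  also have "(\<Sum>z\<in>uminus ` {1..s}. f (t - max 0 z) (s - max 0 (-z))) = (\<Sum>i\<in>{1..s}. f t (s-i))"
    by (subst sum.reindex) (auto intro: sum.cong)
  finally show ?thesis by simp
qed

lemma D_card: "card (D (Suc n) t s) = Arec n t s"
proof (induction n arbitrary: t s)
  case 0
  show ?case
  proof (cases "t < 0 \<or> s < 0")
    case True then show ?thesis by (simp add: D_empty)
  next
    case False
    then have "card (D 1 t s) = (\<Sum>z\<in>{-s..t}. 1)"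
      using D_card_Suc[of 0 t s] by (simp add: D_0)
    then show ?thesis using False by simp
  qed
next
  case (Suc n)
  show ?case
  proof (cases "t < 0 \<or> s < 0")
    case True then show ?thesis by (simp add: D_empty)
  next
    case False
    then show ?thesis
      using D_card_Suc[of "Suc n" t s] split_sum[of t s "\<lambda>a b. card (D (Suc n) a b)"]
      by (simp add: Suc.IH)
  qed
qed

lemma runs_pos: "\<forall>p\<in>set (runs x). snd p \<ge> 1"
  by (induction x) (auto split: list.splits; fastforce)+

lemma runs_succ: "successively (\<lambda>a b. fst a \<noteq> fst b) (runs x)"
  by (induction x) (auto split: list.splits simp: successively_Cons)

lemma runs_rep: "n \<ge> 1 \<Longrightarrow> (runs rest \<noteq> [] \<longrightarrow> fst (hd (runs rest)) \<noteq> c)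
   \<Longrightarrow> runs (replicate n c @ rest) = (c,n) # runs rest"
proof (induction n rule: dec_induct)
  case base then show ?case by (auto split: list.splits)
next
  case (step n) then show ?case by simp
qed

lemma runs_concat: "successively (\<noteq>) cs \<Longrightarrow> length cs = length v \<Longrightarrow> \<forall>n\<in>set v. n \<ge> 1
  \<Longrightarrow> runs (concat (map2 (\<lambda>c n. replicate n c) cs v)) = zip cs v"
proof (induction cs arbitrary: v)
  case Nil then show ?case by simp
next
  case (Cons c cs)
  then obtain n v' where v: "v = n # v'" by (cases v) auto
  have IH: "runs (concat (map2 (\<lambda>c n. replicate n c) cs v')) = zip cs v'"
    using Cons by (auto simp: v successively_Cons)
  show ?case
    using Cons.prems unfolding v
    apply simp
    apply (subst runs_rep)
    using IH by (auto simp: successively_Cons neq_Nil_conv)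
qed

lemma ball_phi:
  assumes "y \<in> sticky_ball t s x"
  shows "length (phi y) = length (runs x)"
    "y = concat (map2 (\<lambda>c n. replicate n c) (run_syms x) (phi y))"
    "(\<Sum>i<length (runs x). max 0 (int (phi x ! i) - int (phi y ! i))) \<le> s"
    "(\<Sum>i<length (runs x). max 0 (int (phi y ! i) - int (phi x ! i))) \<le> t"
proof -
  obtain v where v: "length v = length (runs x)" "\<forall>i<length v. 1 \<le> v ! i"
     "y = concat (map2 (\<lambda>c n. replicate n c) (run_syms x) v)"
     "(\<Sum>i<length v. max 0 (int (phi x ! i) - int (v ! i))) \<le> s"
     "(\<Sum>i<length v. max 0 (int (v ! i) - int (phi x ! i))) \<le> t"
    using assms unfolding sticky_ball_def by blast
  have "successively (\<noteq>) (run_syms x)"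
    unfolding run_syms_def using runs_succ[of x] by (simp add: successively_map)
  then have "runs y = zip (run_syms x) v"
    using v by (auto simp: run_syms_def in_set_conv_nth intro!: runs_concat)
  then have "phi y = v" using v(1) by (simp add: phi_def run_syms_def)
  then show "length (phi y) = length (runs x)"
    "y = concat (map2 (\<lambda>c n. replicate n c) (run_syms x) (phi y))"
    "(\<Sum>i<length (runs x). max 0 (int (phi x ! i) - int (phi y ! i))) \<le> s"
    "(\<Sum>i<length (runs x). max 0 (int (phi y ! i) - int (phi x ! i))) \<le> t"
    using v by auto
qed

lemma count_le:
  assumes r: "length (runs x) = r" "j0 < r"
  and I: "finite I" "inj_on ys I" "\<forall>i\<in>I. ys i \<in> sticky_ball t s x" "\<forall>i\<in>I. int (phi (ys i) ! j0) = k"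
  shows "card I \<le> card (D (r-1) (t - max 0 (k - int (phi x ! j0))) (s - max 0 (int (phi x ! j0) - k)))"
proof -
  define h where "h i l = int (phi (ys i) ! l) - int (phi x ! l)" for i l
  define L where "L = [0..<j0] @ [Suc j0..<r]"
  define f where "f i = map (h i) L" for i
  have setL: "set L = {..<r} - {j0}" using r by (auto simp: L_def)
  have distL: "distinct L" by (auto simp: L_def)
  have lenL: "length L = r - 1" using r by (simp add: L_def)
  have sumL: "sum_list (map g (f i)) = (\<Sum>l<r. g (h i l)) - g (h i j0)" for g :: "int \<Rightarrow> int" and i
  proof -
    have "sum_list (map g (f i)) = sum_list (map (\<lambda>l. g (h i l)) L)" by (simp add: f_def o_def)
    also have "\<dots> = (\<Sum>l\<in>set L. g (h i l))" using distL by (simp add: sum_list_distinct_conv_sum_set)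
    also have "\<dots> = (\<Sum>l<r. g (h i l)) - g (h i j0)" unfolding setL using r by (simp add: sum_diff1)
    finally show ?thesis .
  qed
  have inj: "inj_on f I"
  proof (rule inj_onI)
    fix i i' assume ii: "i \<in> I" "i' \<in> I" "f i = f i'"
    then have hl: "\<forall>l\<in>set L. h i l = h i' l" by (simp add: f_def)
    have "phi (ys i) = phi (ys i')"
    proof (rule nth_equalityI)
      show "length (phi (ys i)) = length (phi (ys i'))" using ball_phi(1) I ii r by metis
      fix l assume "l < length (phi (ys i))"
      then have l: "l < r" using ball_phi(1) I ii r by metis
      show "phi (ys i) ! l = phi (ys i') ! l"
      proof (cases "l = j0")
        case True then show ?thesis using I ii by (metis of_nat_eq_iff)
      next
        case False then have "h i l = h i' l" using hl setL l by auto
        then show ?thesis by (simp add: h_def)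
      qed
    qed
    then have "ys i = ys i'" using ball_phi(2) I ii by metis
    then show "i = i'" using I ii by (meson inj_onD)
  qed
  have sub: "f ` I \<subseteq> D (r-1) (t - max 0 (k - int (phi x ! j0))) (s - max 0 (int (phi x ! j0) - k))"
  proof
    fix d assume "d \<in> f ` I"
    then obtain i where i: "i \<in> I" "d = f i" by auto
    have hj: "h i j0 = k - int (phi x ! j0)" using I i by (simp add: h_def)
    have t1: "(\<Sum>l<r. max 0 (h i l)) \<le> t" using ball_phi(4)[of "ys i" t s x] I i r by (simp add: h_def)
    have s1: "(\<Sum>l<r. max 0 (- h i l)) \<le> s" using ball_phi(3)[of "ys i" t s x] I i r by (simp add: h_def)
    show "d \<in> D (r-1) (t - max 0 (k - int (phi x ! j0))) (s - max 0 (int (phi x ! j0) - k))"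
      unfolding D_def using sumL[of "\<lambda>z. max 0 z" i] sumL[of "\<lambda>z. max 0 (-z)" i] t1 s1 hj i lenL
      by (auto simp: f_def)
  qed
  have "card I = card (f ` I)" using inj by (simp add: card_image)
  also have "\<dots> \<le> card (D (r-1) (t - max 0 (k - int (phi x ! j0))) (s - max 0 (int (phi x ! j0) - k)))"
    using sub D_finite by (rule card_mono[rotated])
  finally show ?thesis .
qed

theorem lemma3:
  fixes q r :: nat and t s :: int and M :: nat
    and x :: "nat list" and ys :: "nat \<Rightarrow> nat list"
  assumes "q \<ge> 2" and "r \<ge> 2" and "t \<ge> 0" and "s \<ge> 0"
    and M_def: "M = (\<Sum>i\<in>{1..t}. A (t - i) s (r - 1)) + (\<Sum>i\<in>{1..s}. A t (s - i) (r - 1)) + 1"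
    and distinct: "inj_on ys {1..M}"
    and x_J: "x \<in> Jstar q r"
    and in_ball: "\<forall>i\<in>{1..M}. ys i \<in> sticky_ball t s x"
  shows "\<forall>j\<in>{1..r}.
     (let u = int (phi x ! (j - 1));
          v = (\<lambda>i. int (phi (ys i) ! (j - 1)));
          a = Min (v ` {1..M});
          b = Max (v ` {1..M});
          c = (\<lambda>k. card {i\<in>{1..M}. v i = k})
      in b - t \<le> u \<and> u \<le> a + s
         \<and> (\<forall>k. a \<le> k \<and> k < u \<longrightarrow> c k \<le> A t (s - u + k) (r - 1))
         \<and> (\<forall>k. u < k \<and> k \<le> b \<longrightarrow> c k \<le> A (t - k + u) s (r - 1)))"
proof
  fix j assume j: "j \<in> {1..r}"
  define j0 where "j0 = j - 1"
  have rx: "length (runs x) = r" using x_J by (simp add: Jstar_def)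
  have j0: "j0 < r" using j by (auto simp: j0_def)
  define u where "u = int (phi x ! j0)"
  define v where "v i = int (phi (ys i) ! j0)" for i
  have M1: "M \<ge> 1" using M_def by simp
  have ne: "v ` {1..M} \<noteq> {}" using M1 by auto
  have fin: "finite (v ` {1..M})" by simp
  have up: "v i - u \<le> t" and dn: "u - v i \<le> s" if i: "i \<in> {1..M}" for i
  proof -
    have b: "ys i \<in> sticky_ball t s x" using in_ball i by auto
    have "max 0 (v i - u) = max 0 (int (phi (ys i) ! j0) - int (phi x ! j0))" by (simp add: v_def u_def)
    also have "\<dots> \<le> (\<Sum>l<r. max 0 (int (phi (ys i) ! l) - int (phi x ! l)))"
      by (rule member_le_sum) (use j0 in auto)
    finally have "max 0 (v i - u) \<le> (\<Sum>l<r. max 0 (int (phi (ys i) ! l) - int (phi x ! l)))" .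
    then show "v i - u \<le> t" using ball_phi(4)[OF b] unfolding rx by (smt (verit))
    have "max 0 (u - v i) = max 0 (int (phi x ! j0) - int (phi (ys i) ! j0))" by (simp add: v_def u_def)
    also have "\<dots> \<le> (\<Sum>l<r. max 0 (int (phi x ! l) - int (phi (ys i) ! l)))"
      by (rule member_le_sum) (use j0 in auto)
    finally have "max 0 (u - v i) \<le> (\<Sum>l<r. max 0 (int (phi x ! l) - int (phi (ys i) ! l)))" .
    then show "u - v i \<le> s" using ball_phi(3)[OF b] unfolding rx by (smt (verit))
  qed
  have c1: "Max (v ` {1..M}) - t \<le> u"
  proof -
    obtain i where "i \<in> {1..M}" "Max (v ` {1..M}) = v i" using Max_in[OF fin ne] by auto
    then show ?thesis using up by fastforce
  qed
  have c2: "u \<le> Min (v ` {1..M}) + s"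
  proof -
    obtain i where "i \<in> {1..M}" "Min (v ` {1..M}) = v i" using Min_in[OF fin ne] by auto
    then show ?thesis using dn by fastforce
  qed
  have cnt: "card {i\<in>{1..M}. v i = k} \<le> card (D (r-1) (t - max 0 (k - u)) (s - max 0 (u - k)))" for k
  proof -
    have f1: "finite {i\<in>{1..M}. v i = k}" by simp
    have f2: "inj_on ys {i\<in>{1..M}. v i = k}" by (rule inj_on_subset[OF distinct]) blast
    have f3: "\<forall>i\<in>{i\<in>{1..M}. v i = k}. ys i \<in> sticky_ball t s x" using in_ball by blast
    have f4: "\<forall>i\<in>{i\<in>{1..M}. v i = k}. int (phi (ys i) ! j0) = k" unfolding v_def by blast
    show ?thesis using count_le[OF rx j0 f1 f2 f3 f4] unfolding u_def .
  qed
  have r1: "Suc (r-2) = r-1" "r-1-1 = r-2" using assms(2) by arith+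
  have DA: "card (D (r-1) a b) = A a b (r - 1)" for a b
    using D_card[of "r - 2" a b] unfolding A_def r1 .
  show "let u = int (phi x ! (j - 1));
          v = (\<lambda>i. int (phi (ys i) ! (j - 1)));
          a = Min (v ` {1..M});
          b = Max (v ` {1..M});
          c = (\<lambda>k. card {i\<in>{1..M}. v i = k})
      in b - t \<le> u \<and> u \<le> a + s
         \<and> (\<forall>k. a \<le> k \<and> k < u \<longrightarrow> c k \<le> A t (s - u + k) (r - 1))
         \<and> (\<forall>k. u < k \<and> k \<le> b \<longrightarrow> c k \<le> A (t - k + u) s (r - 1))"
    unfolding Let_def j0_def[symmetric] u_def[symmetric]
    unfolding v_def[symmetric]
  proof (intro conjI allI impI)
    show "Max (v ` {1..M}) - t \<le> u" by (rule c1)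
    show "u \<le> Min (v ` {1..M}) + s" by (rule c2)
    fix k
    assume "Min (v ` {1..M}) \<le> k \<and> k < u"
    then have e: "t - max 0 (k - u) = t" "s - max 0 (u - k) = s - u + k" by auto
    show "card {i \<in> {1..M}. v i = k} \<le> A t (s - u + k) (r - 1)"
      using cnt[of k] unfolding DA e .
  next
    fix k
    assume "u < k \<and> k \<le> Max (v ` {1..M})"
    then have e: "t - max 0 (k - u) = t - k + u" "s - max 0 (u - k) = s" by auto
    show "card {i \<in> {1..M}. v i = k} \<le> A (t - k + u) s (r - 1)"
      using cnt[of k] unfolding DA e .
  qed
qed

end
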